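(* Let $N\ge 1$, $c\in\mathbb{R}$, and consider the manifold of Jacobi parameters $a_1,\dots,a_{N-1}>0$, $b_1,\dots,b_N\in\mathbb{R}$ with $\sum_{j=1}^N b_j=c$, with the Poisson bracket described in the context. Let $P_n$ be the monic orthogonal polynomials defined in the context. Then for every $n=1,2,\dots,N$ and all $x,y$, \[ \{P_n(x),P_n(y)\}=\{P_{n-1}(x),P_{n-1}(y)\}=0, \] \[ 2\{P_n(x),P_{n-1}(y)\} = \frac{P_n(x)P_{n-1}(y)-P_n(y)P_{n-1}(x)}{x-y} - P_{n-1}(x)P_{n-1}(y). \]
   Context: The Poisson bracket on functions of $(a_1,\dots,a_{N-1},b_1,\dots,b_N)$ is the bilinear antisymmetric bracket satisfying the Leibniz rule whose only nonzero brackets among the coordinates are $\{b_k,a_k\}=-\tfrac14 a_k$ for $k=1,\dots,N-1$ and $\{b_k,a_{k-1}\}=\tfrac14 a_{k-1}$ for $k=2,\dots,N$. Brackets of functions depending on auxiliary variables $x,y$ are computed with $x,y$ held fixed; the identity with the difference quotient is understood as an identity of polynomials in $x,y$. The monic polynomials are defined by $P_{-1}=0$, $P_0=1$, $P_{j+1}(x)=(x-b_{j+1})P_j(x)-a_j^2P_{j-1}(x)$; equivalently $P_n(x)=\det(x-J_n)$ where $J_n$ is the $n\times n$ tridiagonal matrix with diagonal $b_1,\dots,b_n$ and off-diagonal entries $a_1,\dots,a_{n-1}$. *)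

theory Defs
  imports "HOL-Analysis.Analysis"
begin

text \<open>Jacobi parameters are represented by functions a b :: nat => real, of which only
 a 1 .. a (N-1) and b 1 .. b N are used.\<close>

definition dA :: "((nat \<Rightarrow> real) \<Rightarrow> (nat \<Rightarrow> real) \<Rightarrow> real) \<Rightarrow> nat \<Rightarrow> (nat \<Rightarrow> real) \<Rightarrow> (nat \<Rightarrow> real) \<Rightarrow> real"
  where "dA F k a b = deriv (\<lambda>t. F (a(k := t)) b) (a k)"

definition dB :: "((nat \<Rightarrow> real) \<Rightarrow> (nat \<Rightarrow> real) \<Rightarrow> real) \<Rightarrow> nat \<Rightarrow> (nat \<Rightarrow> real) \<Rightarrow> (nat \<Rightarrow> real) \<Rightarrow> real"
  where "dB F k a b = deriv (\<lambda>t. F a (b(k := t))) (b k)"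

text \<open>The Poisson bracket {F,G} = sum_{i,j} {z_i,z_j} dF/dz_i dG/dz_j with structure
 {b_k,a_k} = -a_k/4 (k=1..N-1), {b_k,a_(k-1)} = a_(k-1)/4 (k=2..N), all other
 brackets of coordinates zero.\<close>
definition pb :: "nat \<Rightarrow> ((nat \<Rightarrow> real) \<Rightarrow> (nat \<Rightarrow> real) \<Rightarrow> real)
    \<Rightarrow> ((nat \<Rightarrow> real) \<Rightarrow> (nat \<Rightarrow> real) \<Rightarrow> real) \<Rightarrow> (nat \<Rightarrow> real) \<Rightarrow> (nat \<Rightarrow> real) \<Rightarrow> real"
  where "pb N F G a b =
    (\<Sum>k=1..N-1. (- a k / 4) * (dB F k a b * dA G k a b - dA F k a b * dB G k a b))
  + (\<Sum>k=2..N. (a (k-1) / 4) * (dB F k a b * dA G (k-1) a b - dA F (k-1) a b * dB G k a b))"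

fun P :: "(nat \<Rightarrow> real) \<Rightarrow> (nat \<Rightarrow> real) \<Rightarrow> nat \<Rightarrow> real \<Rightarrow> real" where
  "P a b 0 x = 1"
| "P a b (Suc 0) x = x - b 1"
| "P a b (Suc (Suc j)) x = (x - b (j + 2)) * P a b (Suc j) x - (a (j + 1))^2 * P a b j x"

end

theory Submission
  imports Defs
begin


definition smth :: "((nat \<Rightarrow> real) \<Rightarrow> (nat \<Rightarrow> real) \<Rightarrow> real) \<Rightarrow> bool" where
"smth F \<longleftrightarrow> (\<forall>k a b t. (\<lambda>s. F (a(k:=s)) b) differentiable (at t)) \<and>
   (\<forall>k a b t. (\<lambda>s. F a (b(k:=s))) differentiable (at t))"

lemma smth_const[simp]: "smth (\<lambda>p q. c)"
  by (simp add: smth_def)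

lemma smth_mult[simp]: "smth F \<Longrightarrow> smth G \<Longrightarrow> smth (\<lambda>p q. F p q * G p q)"
  by (simp add: smth_def)

lemma smth_diff[simp]: "smth F \<Longrightarrow> smth G \<Longrightarrow> smth (\<lambda>p q. F p q - G p q)"
  by (simp add: smth_def)

lemma smth_pow[simp]: "smth F \<Longrightarrow> smth (\<lambda>p q. (F p q)^2)"
  using smth_mult[of F F] by (simp add: power2_eq_square)

lemma smth_A[simp]: "smth (\<lambda>p q. p j)"
  unfolding smth_def apply (auto simp: fun_upd_apply)
  subgoal for k a t by (cases "j = k") auto
  done

lemma smth_B[simp]: "smth (\<lambda>p q. q j)"
  unfolding smth_def apply (auto simp: fun_upd_apply)
  subgoal for k a t by (cases "j = k") auto
  done

lemma smth_P[simp]: "smth (\<lambda>p q. P p q m x)"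
proof (induction m rule: less_induct)
  case (less m)
  show ?case
  proof (cases m)
    case 0 then show ?thesis by simp
  next
    case (Suc j) note j = this
    show ?thesis
    proof (cases j)
      case 0 then show ?thesis using j by simp
    next
      case (Suc i)
      have e: "(\<lambda>p q. P p q m x) = (\<lambda>p q. (x - q (i+2)) * P p q (Suc i) x - (p (i+1))^2 * P p q i x)"
        using j Suc by (simp add: fun_eq_iff)
      show ?thesis unfolding e using less j Suc by simp
    qed
  qed
qed

lemma dA_mult: assumes "smth F" "smth G"
  shows "dA (\<lambda>p q. F p q * G p q) k a b = dA F k a b * G a b + F a b * dA G k a b"
proof -
  have d1: "((\<lambda>s. F (a(k:=s)) b) has_real_derivative dA F k a b) (at (a k))"
    using assms(1) unfolding smth_def dA_def by (simp add: DERIV_deriv_iff_real_differentiable)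
  have d2: "((\<lambda>s. G (a(k:=s)) b) has_real_derivative dA G k a b) (at (a k))"
    using assms(2) unfolding smth_def dA_def by (simp add: DERIV_deriv_iff_real_differentiable)
  show ?thesis unfolding dA_def[of "\<lambda>p q. F p q * G p q"]
    using DERIV_imp_deriv[OF DERIV_mult[OF d1 d2]] by (simp add: algebra_simps)
qed

lemma dB_mult: assumes "smth F" "smth G"
  shows "dB (\<lambda>p q. F p q * G p q) k a b = dB F k a b * G a b + F a b * dB G k a b"
proof -
  have d1: "((\<lambda>s. F a (b(k:=s))) has_real_derivative dB F k a b) (at (b k))"
    using assms(1) unfolding smth_def dB_def by (simp add: DERIV_deriv_iff_real_differentiable)
  have d2: "((\<lambda>s. G a (b(k:=s))) has_real_derivative dB G k a b) (at (b k))"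
    using assms(2) unfolding smth_def dB_def by (simp add: DERIV_deriv_iff_real_differentiable)
  show ?thesis unfolding dB_def[of "\<lambda>p q. F p q * G p q"]
    using DERIV_imp_deriv[OF DERIV_mult[OF d1 d2]] by (simp add: algebra_simps)
qed

lemma dA_diff: assumes "smth F" "smth G"
  shows "dA (\<lambda>p q. F p q - G p q) k a b = dA F k a b - dA G k a b"
proof -
  have d1: "((\<lambda>s. F (a(k:=s)) b) has_real_derivative dA F k a b) (at (a k))"
    using assms(1) unfolding smth_def dA_def by (simp add: DERIV_deriv_iff_real_differentiable)
  have d2: "((\<lambda>s. G (a(k:=s)) b) has_real_derivative dA G k a b) (at (a k))"
    using assms(2) unfolding smth_def dA_def by (simp add: DERIV_deriv_iff_real_differentiable)
  show ?thesis unfolding dA_def[of "\<lambda>p q. F p q - G p q"]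
    using DERIV_imp_deriv[OF DERIV_diff[OF d1 d2]] by (simp add: algebra_simps)
qed

lemma dB_diff: assumes "smth F" "smth G"
  shows "dB (\<lambda>p q. F p q - G p q) k a b = dB F k a b - dB G k a b"
proof -
  have d1: "((\<lambda>s. F a (b(k:=s))) has_real_derivative dB F k a b) (at (b k))"
    using assms(1) unfolding smth_def dB_def by (simp add: DERIV_deriv_iff_real_differentiable)
  have d2: "((\<lambda>s. G a (b(k:=s))) has_real_derivative dB G k a b) (at (b k))"
    using assms(2) unfolding smth_def dB_def by (simp add: DERIV_deriv_iff_real_differentiable)
  show ?thesis unfolding dB_def[of "\<lambda>p q. F p q - G p q"]
    using DERIV_imp_deriv[OF DERIV_diff[OF d1 d2]] by (simp add: algebra_simps)
qed

lemma dA_const[simp]: "dA (\<lambda>p q. c) k a b = 0" by (simp add: dA_def)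
lemma dB_const[simp]: "dB (\<lambda>p q. c) k a b = 0" by (simp add: dB_def)

lemma dA_A: "dA (\<lambda>p q. p j) k a b = (if k = j then 1 else 0)"
  by (cases "k = j") (auto simp: dA_def fun_upd_apply)
lemma dB_A[simp]: "dB (\<lambda>p q. p j) k a b = 0" by (simp add: dB_def)
lemma dA_B[simp]: "dA (\<lambda>p q. q j) k a b = 0" by (simp add: dA_def)
lemma dB_B: "dB (\<lambda>p q. q j) k a b = (if k = j then 1 else 0)"
  by (cases "k = j") (auto simp: dB_def fun_upd_apply)

lemma pb_antisym: "pb N F G a b = - pb N G F a b"
  unfolding pb_def by (simp add: algebra_simps sum_negf[symmetric])

lemma pb_mult_left: assumes "smth F" "smth G"
  shows "pb N (\<lambda>p q. F p q * G p q) H a b = F a b * pb N G H a b + G a b * pb N F H a b"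
  unfolding pb_def dA_mult[OF assms] dB_mult[OF assms]
  by (simp add: sum_distrib_left sum.distrib[symmetric] algebra_simps)

lemma pb_diff_left: assumes "smth F" "smth G"
  shows "pb N (\<lambda>p q. F p q - G p q) H a b = pb N F H a b - pb N G H a b"
proof -
  have 1: "(\<Sum>k=1..N-1. (- a k / 4) * ((dB F k a b - dB G k a b) * dA H k a b - (dA F k a b - dA G k a b) * dB H k a b))
    = (\<Sum>k=1..N-1. (- a k / 4) * (dB F k a b * dA H k a b - dA F k a b * dB H k a b))
    - (\<Sum>k=1..N-1. (- a k / 4) * (dB G k a b * dA H k a b - dA G k a b * dB H k a b))"
    unfolding sum_subtractf[symmetric] by (rule sum.cong) (simp_all add: algebra_simps)
  have 2: "(\<Sum>k=2..N. (a (k-1) / 4) * ((dB F k a b - dB G k a b) * dA H (k-1) a b - (dA F (k-1) a b - dA G (k-1) a b) * dB H k a b))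
    = (\<Sum>k=2..N. (a (k-1) / 4) * (dB F k a b * dA H (k-1) a b - dA F (k-1) a b * dB H k a b))
    - (\<Sum>k=2..N. (a (k-1) / 4) * (dB G k a b * dA H (k-1) a b - dA G (k-1) a b * dB H k a b))"
    unfolding sum_subtractf[symmetric] by (rule sum.cong) (simp_all add: algebra_simps)
  show ?thesis unfolding pb_def dA_diff[OF assms] dB_diff[OF assms] 1 2 by simp
qed

lemma pb_const_left[simp]: "pb N (\<lambda>p q. c) H a b = 0"
  unfolding pb_def by simp

lemma pb_mult_right: assumes "smth F" "smth G"
  shows "pb N H (\<lambda>p q. F p q * G p q) a b = F a b * pb N H G a b + G a b * pb N H F a b"
  by (metis (no_types) pb_antisym pb_mult_left[OF assms] minus_add_distrib mult_minus_right)

lemma pb_diff_right: assumes "smth F" "smth G"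
  shows "pb N H (\<lambda>p q. F p q - G p q) a b = pb N H F a b - pb N H G a b"
  by (metis (no_types) pb_antisym pb_diff_left[OF assms] minus_diff_eq minus_diff_minus)

lemma pb_const_right[simp]: "pb N H (\<lambda>p q. c) a b = 0"
  by (metis pb_antisym pb_const_left neg_equal_0_iff_equal)



lemma sum_single: assumes "finite A" "\<And>k. k \<in> A \<Longrightarrow> k \<noteq> j \<Longrightarrow> f k = 0"
  shows "sum f A = (if j \<in> A then f j else 0)"
proof (cases "j \<in> A")
  case True
  then have "sum f A = f j + sum f (A - {j})" using assms(1) by (simp add: sum.remove)
  also have "sum f (A - {j}) = 0" using assms(2) by (intro sum.neutral) auto
  finally show ?thesis using True by simp
next
  case False then show ?thesis using assms(2) by (auto intro!: sum.neutral)
qed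

lemma pb_B: "pb N (\<lambda>p q. q j) G a b =
   (if 1 \<le> j \<and> j \<le> N-1 then - a j / 4 * dA G j a b else 0)
 + (if 2 \<le> j \<and> j \<le> N then a (j-1) / 4 * dA G (j-1) a b else 0)"
proof -
  have 1: "(\<Sum>k=1..N-1. (- a k / 4) * (dB (\<lambda>p q. q j) k a b * dA G k a b - dA (\<lambda>p q. q j) k a b * dB G k a b))
     = (if 1 \<le> j \<and> j \<le> N-1 then - a j / 4 * dA G j a b else 0)"
    by (subst sum_single[where j=j]) (auto simp: dB_B)
  have 2: "(\<Sum>k=2..N. (a (k-1) / 4) * (dB (\<lambda>p q. q j) k a b * dA G (k-1) a b - dA (\<lambda>p q. q j) (k-1) a b * dB G k a b))
     = (if 2 \<le> j \<and> j \<le> N then a (j-1) / 4 * dA G (j-1) a b else 0)"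
    by (subst sum_single[where j=j]) (auto simp: dB_B)
  show ?thesis unfolding pb_def 1 2 ..
qed

lemma pb_A: "pb N (\<lambda>p q. p j) G a b =
   (if 1 \<le> j \<and> j \<le> N-1 then a j / 4 * dB G j a b else 0)
 - (if 1 \<le> j \<and> j+1 \<le> N then a j / 4 * dB G (j+1) a b else 0)"
proof -
  have 1: "(\<Sum>k=1..N-1. (- a k / 4) * (dB (\<lambda>p q. p j) k a b * dA G k a b - dA (\<lambda>p q. p j) k a b * dB G k a b))
     = (if 1 \<le> j \<and> j \<le> N-1 then a j / 4 * dB G j a b else 0)"
    by (subst sum_single[where j=j]) (auto simp: dA_A)
  have 2: "(\<Sum>k=2..N. (a (k-1) / 4) * (dB (\<lambda>p q. p j) k a b * dA G (k-1) a b - dA (\<lambda>p q. p j) (k-1) a b * dB G k a b))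
     = - (if 1 \<le> j \<and> j+1 \<le> N then a j / 4 * dB G (j+1) a b else 0)"
    by (subst sum_single[where j="j+1"]) (auto simp: dA_A)
  show ?thesis unfolding pb_def 1 2 by simp
qed

lemma P_indA: "m \<le> k \<Longrightarrow> P (a(k:=t)) b m x = P a b m x"
  by (induction a b m x rule: P.induct) auto

lemma P_indB: "m < k \<Longrightarrow> P a (b(k:=t)) m x = P a b m x"
  by (induction a b m x rule: P.induct) auto

lemma dA_P0: "m \<le> k \<Longrightarrow> dA (\<lambda>p q. P p q m x) k a b = 0"
  by (simp add: dA_def P_indA)

lemma dB_P0: "m < k \<Longrightarrow> dB (\<lambda>p q. P p q m x) k a b = 0"
  by (simp add: dB_def P_indB)

lemma dB_Pself: "dB (\<lambda>p q. P p q (Suc m) x) (Suc m) a b = - P a b m x"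
proof (cases m)
  case 0
  have "DERIV (\<lambda>t. x - t) (b 1) :> -1" by (auto intro!: derivative_eq_intros)
  then show ?thesis using 0 by (simp add: dB_def DERIV_imp_deriv)
next
  case (Suc i)
  have e: "(\<lambda>t. P a (b(Suc m := t)) (Suc m) x) = (\<lambda>t. (x - t) * P a b (Suc i) x - (a (i+1))^2 * P a b i x)"
    using Suc by (simp add: fun_eq_iff P_indB)
  have "DERIV (\<lambda>t. (x - t) * P a b (Suc i) x - (a (i+1))^2 * P a b i x) (b (Suc m)) :> - P a b (Suc i) x"
    by (auto intro!: derivative_eq_intros)
  then show ?thesis unfolding dB_def e using Suc by (simp add: DERIV_imp_deriv)
qed


lemma pb_pow_left: "smth F \<Longrightarrow> pb N (\<lambda>p q. (F p q)^2) H a b = 2 * F a b * pb N F H a b"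
  using pb_mult_left[of F F N H a b] by (simp add: power2_eq_square)

lemma pb_pow_right: "smth F \<Longrightarrow> pb N H (\<lambda>p q. (F p q)^2) a b = 2 * F a b * pb N H F a b"
  using pb_mult_right[of F F N H a b] by (simp add: power2_eq_square)

lemma pb_rec_left: assumes "smth F" "smth G"
  shows "pb N (\<lambda>p q. (x - q j) * F p q - (p i)^2 * G p q) H a b
   = (x - b j) * pb N F H a b - F a b * pb N (\<lambda>p q. q j) H a b - (a i)^2 * pb N G H a b
     - 2 * a i * G a b * pb N (\<lambda>p q. p i) H a b"
  using assms by (simp add: pb_diff_left pb_mult_left pb_pow_left)

lemma pb_rec_right: assumes "smth F" "smth G"
  shows "pb N H (\<lambda>p q. (x - q j) * F p q - (p i)^2 * G p q) a b
   = (x - b j) * pb N H F a b - F a b * pb N H (\<lambda>p q. q j) a b - (a i)^2 * pb N H G a b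
     - 2 * a i * G a b * pb N H (\<lambda>p q. p i) a b"
  using assms by (simp add: pb_diff_right pb_mult_right pb_pow_right)

lemma main:
  fixes a b :: "nat \<Rightarrow> real"
  shows "1 \<le> n \<Longrightarrow> n \<le> N \<Longrightarrow>
      (\<forall>x y. pb N (\<lambda>p q. P p q n x) (\<lambda>p q. P p q n y) a b = 0)
    \<and> (\<forall>x y. pb N (\<lambda>p q. P p q (n-1) x) (\<lambda>p q. P p q (n-1) y) a b = 0)
    \<and> (\<forall>x y. x \<noteq> y \<longrightarrow>
            2 * pb N (\<lambda>p q. P p q n x) (\<lambda>p q. P p q (n-1) y) a b
          = (P a b n x * P a b (n-1) y - P a b n y * P a b (n-1) x) / (x - y)
            - P a b (n-1) x * P a b (n-1) y)"
proof (induction n)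
  case 0 then show ?case by simp
next
  case (Suc n)
  show ?case
  proof (cases n)
    case 0
    have e1: "(\<lambda>p q. P p q (Suc 0) z) = (\<lambda>p q. z - q 1)" for z by (simp add: fun_eq_iff)
    have "pb N (\<lambda>p q. z - q 1) (\<lambda>p q. w - q 1) a b = 0" for z w
      by (simp add: pb_diff_left pb_diff_right pb_B dA_diff)
    then show ?thesis using 0 by (simp add: e1 field_simps)
  next
    case (Suc m)
    note n = this
    have N2: "Suc (Suc m) \<le> N" using Suc.prems n by simp
    have IH: "(\<forall>x y. pb N (\<lambda>p q. P p q (Suc m) x) (\<lambda>p q. P p q (Suc m) y) a b = 0)
    \<and> (\<forall>x y. pb N (\<lambda>p q. P p q m x) (\<lambda>p q. P p q m y) a b = 0)
    \<and> (\<forall>x y. x \<noteq> y \<longrightarrow>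
            2 * pb N (\<lambda>p q. P p q (Suc m) x) (\<lambda>p q. P p q m y) a b
          = (P a b (Suc m) x * P a b m y - P a b (Suc m) y * P a b m x) / (x - y)
            - P a b m x * P a b m y)"
      using Suc.IH Suc.prems n by simp
    define A where "A = a (Suc m)"
    have eR: "(\<lambda>p q. P p q (Suc (Suc m)) z) = (\<lambda>p q. (z - q (Suc (Suc m))) * P p q (Suc m) z - (p (Suc m))^2 * P p q m z)" for z
      by (simp add: fun_eq_iff)
    have b1: "pb N (\<lambda>p q. q (Suc (Suc m))) (\<lambda>p q. P p q k z) a b = 0" if "k \<le> Suc m" for k z
      using that by (simp add: pb_B dA_P0)
    have b2: "pb N (\<lambda>p q. q (Suc (Suc m))) (\<lambda>p q. q (Suc (Suc m))) a b = 0" by (simp add: pb_B)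
    have b3: "pb N (\<lambda>p q. q (Suc (Suc m))) (\<lambda>p q. p (Suc m)) a b = A / 4"
      using N2 by (simp add: pb_B dA_A A_def)
    have a1: "pb N (\<lambda>p q. p (Suc m)) (\<lambda>p q. P p q (Suc m) z) a b = - A / 4 * P a b m z" for z
      using N2 dB_Pself[of m z a b] by (simp add: pb_A dB_P0 A_def)
    have a2: "pb N (\<lambda>p q. p (Suc m)) (\<lambda>p q. P p q m z) a b = 0" for z
      by (simp add: pb_A dB_P0)
    have a3: "pb N (\<lambda>p q. p (Suc m)) (\<lambda>p q. p (Suc m)) a b = 0" by (simp add: pb_A)
    have b1': "pb N (\<lambda>p q. P p q k z) (\<lambda>p q. q (Suc (Suc m))) a b = 0" if "k \<le> Suc m" for k z
      using b1[OF that] pb_antisym by (metis neg_equal_0_iff_equal)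
    have b3': "pb N (\<lambda>p q. p (Suc m)) (\<lambda>p q. q (Suc (Suc m))) a b = - A / 4"
      using b3 pb_antisym by (metis minus_divide_left)
    have a1': "pb N (\<lambda>p q. P p q (Suc m) z) (\<lambda>p q. p (Suc m)) a b = A / 4 * P a b m z" for z
      using a1[of z] pb_antisym[of N "\<lambda>p q. P p q (Suc m) z"] by simp
    have a2': "pb N (\<lambda>p q. P p q m z) (\<lambda>p q. p (Suc m)) a b = 0" for z
      using a2[of z] pb_antisym[of N "\<lambda>p q. P p q m z"] by simp
    define B where "B z w = pb N (\<lambda>p q. P p q (Suc m) z) (\<lambda>p q. P p q m w) a b" for z w
    have BB: "B z w = ((P a b (Suc m) z * P a b m w - P a b (Suc m) w * P a b m z) / (z - w)
            - P a b m z * P a b m w) / 2" if "z \<noteq> w" for z w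
      using IH that unfolding B_def by (metis nonzero_mult_div_cancel_left zero_neq_numeral)
    have B': "pb N (\<lambda>p q. P p q m z) (\<lambda>p q. P p q (Suc m) w) a b = - B w z" for z w
      unfolding B_def by (rule pb_antisym)
    have T1: "pb N (\<lambda>p q. P p q (Suc (Suc m)) x) (\<lambda>p q. P p q (Suc m) y) a b
       = A^2 * B y x + A^2/2 * P a b m x * P a b m y" for x y
      unfolding eR[of x] pb_rec_left[OF smth_P smth_P]
      using IH by (simp add: b1 a1 B' A_def algebra_simps power2_eq_square)
    have T2: "pb N (\<lambda>p q. P p q (Suc (Suc m)) x) (\<lambda>p q. P p q (Suc (Suc m)) y) a b
       = - (x - b (Suc (Suc m))) * A^2 * B x y - (y - b (Suc (Suc m))) * A^2 * (- B y x)
         + A^2 / 2 * (- (x - b (Suc (Suc m))) * P a b m x * P a b m y + P a b (Suc m) x * P a b m y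
           + (y - b (Suc (Suc m))) * P a b m x * P a b m y - P a b m x * P a b (Suc m) y)" for x y
      unfolding eR pb_rec_left[OF smth_P smth_P] pb_rec_right[OF smth_P smth_P]
      using IH by (simp add: b1 b1' b2 b3 b3' a1 a1' a2 a2' a3 B' B_def[symmetric] A_def algebra_simps power2_eq_square) (simp add: field_simps)
    show ?thesis
    proof (intro conjI allI impI)
      fix x y
      show "pb N (\<lambda>p q. P p q (Suc n) x) (\<lambda>p q. P p q (Suc n) y) a b = 0"
      proof (cases "x = y")
        case True then show ?thesis by (simp add: pb_def)
      next
        case False
        then have "x - y \<noteq> 0" "y - x \<noteq> 0" by auto
        have h1: "2 * B x y * (x - y) = P a b (Suc m) x * P a b m y - P a b (Suc m) y * P a b m x - (x - y) * P a b m x * P a b m y"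
          using BB[OF False] \<open>x - y \<noteq> 0\<close> by (simp add: field_simps)
        have h2: "2 * B y x * (y - x) = P a b (Suc m) y * P a b m x - P a b (Suc m) x * P a b m y - (y - x) * P a b m y * P a b m x"
          using BB[OF not_sym[OF False]] \<open>y - x \<noteq> 0\<close> by (simp add: field_simps)
        have "(x - y) * pb N (\<lambda>p q. P p q (Suc (Suc m)) x) (\<lambda>p q. P p q (Suc (Suc m)) y) a b = 0"
        proof -
          define u where "u = B x y"
          define v where "v = B y x"
          have "(x - y) * pb N (\<lambda>p q. P p q (Suc (Suc m)) x) (\<lambda>p q. P p q (Suc (Suc m)) y) a b
            = - (x - b (Suc (Suc m))) * A^2 / 2 * (2 * u * (x - y)) - (y - b (Suc (Suc m))) * A^2 / 2 * (2 * v * (y - x))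
              + (x - y) * A^2 / 2 * (- (x - b (Suc (Suc m))) * P a b m x * P a b m y + P a b (Suc m) x * P a b m y
           + (y - b (Suc (Suc m))) * P a b m x * P a b m y - P a b m x * P a b (Suc m) y)"
            unfolding T2 u_def v_def by (simp add: field_simps)
          also have "\<dots> = 0" unfolding u_def v_def h1 h2 by (simp add: field_simps)
          finally show ?thesis .
        qed
        then show ?thesis using \<open>x - y \<noteq> 0\<close> n by simp
      qed
    next
      fix x y
      show "pb N (\<lambda>p q. P p q (Suc n - 1) x) (\<lambda>p q. P p q (Suc n - 1) y) a b = 0"
        using IH n by simp
    next
      fix x y :: real assume xy: "x \<noteq> y"
      then have "x - y \<noteq> 0" "y - x \<noteq> 0" by auto
      show "2 * pb N (\<lambda>p q. P p q (Suc n) x) (\<lambda>p q. P p q (Suc n - 1) y) a b =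
         (P a b (Suc n) x * P a b (Suc n - 1) y - P a b (Suc n) y * P a b (Suc n - 1) x) / (x - y) -
         P a b (Suc n - 1) x * P a b (Suc n - 1) y"
      proof -
        have h2: "2 * B y x * (y - x) = P a b (Suc m) y * P a b m x - P a b (Suc m) x * P a b m y - (y - x) * P a b m y * P a b m x"
          using BB[OF not_sym[OF xy]] \<open>y - x \<noteq> 0\<close> by (simp add: field_simps)
        have "(2 * pb N (\<lambda>p q. P p q (Suc (Suc m)) x) (\<lambda>p q. P p q (Suc m) y) a b + P a b (Suc m) x * P a b (Suc m) y) * (x - y)
           = P a b (Suc (Suc m)) x * P a b (Suc m) y - P a b (Suc (Suc m)) y * P a b (Suc m) x"
        proof -
          have "(2 * pb N (\<lambda>p q. P p q (Suc (Suc m)) x) (\<lambda>p q. P p q (Suc m) y) a b + P a b (Suc m) x * P a b (Suc m) y) * (x - y)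
            = (- (A^2)) * (2 * B y x * (y - x)) + A^2 * P a b m x * P a b m y * (x - y) + P a b (Suc m) x * P a b (Suc m) y * (x - y)"
            unfolding T1 by (simp add: algebra_simps)
          also have "\<dots> = P a b (Suc (Suc m)) x * P a b (Suc m) y - P a b (Suc (Suc m)) y * P a b (Suc m) x"
            unfolding h2 A_def P.simps(3) by (simp add: algebra_simps)
          finally show ?thesis .
        qed
        then show ?thesis unfolding n using \<open>x - y \<noteq> 0\<close> by (simp add: field_simps)
      qed
    qed
  qed
qed


theorem theorem2p3:
  fixes N n :: nat and c x y :: real and a b :: "nat \<Rightarrow> real"
  assumes "N \<ge> 1"
    and "\<forall>k\<in>{1..N-1}. a k > 0"
    and "(\<Sum>j=1..N. b j) = c"
    and "1 \<le> n" and "n \<le> N"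
  shows "pb N (\<lambda>p q. P p q n x) (\<lambda>p q. P p q n y) a b = 0
       \<and> pb N (\<lambda>p q. P p q (n-1) x) (\<lambda>p q. P p q (n-1) y) a b = 0
       \<and> (x \<noteq> y \<longrightarrow>
            2 * pb N (\<lambda>p q. P p q n x) (\<lambda>p q. P p q (n-1) y) a b
          = (P a b n x * P a b (n-1) y - P a b n y * P a b (n-1) x) / (x - y)
            - P a b (n-1) x * P a b (n-1) y)"
  using main[OF assms(4) assms(5), of a b] by blast

end
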